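(* Let $s_1,s_2\ge0$, $s=(s_1,s_2)$. For a probability vector $q$ on $\hat{\mathcal X}$, define: - $A(x,\hat x,s)=\exp\{-s_1d(x,\hat x)-s_2g(p,q_{Q[q]},\hat x)\}$, with $g(p,r,\hat x)=f\big(\tfrac{p(\hat x)}{r(\hat x)}\big)-\tfrac{p(\hat x)}{r(\hat x)}\partial f\big(\tfrac{p(\hat x)}{r(\hat x)}\big)$; - $Q[q](\hat x|x)=q(\hat x)A(x,\hat x,s)/\sum_{i}q(i)A(x,i,s)$, which is defined implicitly, since $A$ depends on the output marginal $q_{Q[q]}$ of $Q[q]$. Let $q^*$ achieve the minimum below, and set $$D_s=\sum_{x,\hat x}p(x)\frac{q^*(\hat x)A(x,\hat x,s)}{\sum_i q^*(i)A(x,i,s)}d(x,\hat x),\qquad P_s=D_f(p\|q_{Q[q^*]}).$$ Then $$R(D_s,P_s)=-s_1D_s-s_2P_s+\min_q\Big[s_2\sum_{\hat x}p(\hat x)\,\partial f\Big(\frac{p(\hat x)}{q_{Q[q]}(\hat x)}\Big)-\sum_x p(x)\log\Big(\sum_{\hat x}q(\hat x)A(x,\hat x,s)\Big)\Big].$$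
   Context: Finite alphabets $\mathcal X=\hat{\mathcal X}$ (same finite set). The source distribution is $p$ on $\mathcal X$, and $d:\mathcal X\times\hat{\mathcal X}\to[0,\infty)$ is a distortion. $f:(0,\infty)\to\mathbb R$ is convex with $f(1)=0$, and $D_f(p\|q)=\sum_x q(x)f(p(x)/q(x))$. $\partial f(t)$ denotes a subgradient of $f$ at $t$. For a transition matrix $Q$, $q_Q(\hat x)=\sum_xp(x)Q(\hat x|x)$ is the output marginal, and $I(p,Q)=\sum_{x,\hat x}p(x)Q(\hat x|x)\log\frac{Q(\hat x|x)}{q_Q(\hat x)}$. The rate-distortion-perception function is $R(D,P)=\min_Q I(p,Q)$ subject to $\sum_{x,\hat x}p(x)Q(\hat x|x)d(x,\hat x)\le D$ and $D_f(p\|q_Q)\le P$, for $D,P>0$. *)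

theory Defs
  imports "HOL-Analysis.Analysis"
begin

text \<open>Alphabet: a finite type 'a (X = hat X). A channel Q is written Q x xh = Q(xh|x).
  The distributions are functions 'a \<Rightarrow> real.\<close>

definition prob_vec :: "('a::finite \<Rightarrow> real) \<Rightarrow> bool" where
  "prob_vec q \<longleftrightarrow> (\<forall>x. q x \<ge> 0) \<and> (\<Sum>x\<in>UNIV. q x) = 1"

definition channel :: "('a::finite \<Rightarrow> 'a \<Rightarrow> real) \<Rightarrow> bool" where
  "channel Q \<longleftrightarrow> (\<forall>x xh. Q x xh \<ge> 0) \<and> (\<forall>x. (\<Sum>xh\<in>UNIV. Q x xh) = 1)"

definition out_marg :: "('a::finite \<Rightarrow> real) \<Rightarrow> ('a \<Rightarrow> 'a \<Rightarrow> real) \<Rightarrow> 'a \<Rightarrow> real" where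
  "out_marg p Q xh = (\<Sum>x\<in>UNIV. p x * Q x xh)"

definition mutual_info :: "('a::finite \<Rightarrow> real) \<Rightarrow> ('a \<Rightarrow> 'a \<Rightarrow> real) \<Rightarrow> real" where
  "mutual_info p Q = (\<Sum>x\<in>UNIV. \<Sum>xh\<in>UNIV. p x * Q x xh * ln (Q x xh / out_marg p Q xh))"

definition f_div :: "(real \<Rightarrow> real) \<Rightarrow> ('a::finite \<Rightarrow> real) \<Rightarrow> ('a \<Rightarrow> real) \<Rightarrow> real" where
  "f_div f p q = (\<Sum>x\<in>UNIV. q x * f (p x / q x))"

definition exp_dist :: "('a::finite \<Rightarrow> real) \<Rightarrow> ('a \<Rightarrow> 'a \<Rightarrow> real) \<Rightarrow> ('a \<Rightarrow> 'a \<Rightarrow> real) \<Rightarrow> real" where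
  "exp_dist p Q d = (\<Sum>x\<in>UNIV. \<Sum>xh\<in>UNIV. p x * Q x xh * d x xh)"

text \<open>Since f is only defined on (0,\<infinity>),
  D_f(p||q_Q) is only defined when q_Q has full support; this is part of the constraint.\<close>
definition rdp :: "(real \<Rightarrow> real) \<Rightarrow> ('a::finite \<Rightarrow> real) \<Rightarrow> ('a \<Rightarrow> 'a \<Rightarrow> real) \<Rightarrow> real \<Rightarrow> real \<Rightarrow> real" where
  "rdp f p d D P = Inf {mutual_info p Q | Q. channel Q \<and> (\<forall>xh. out_marg p Q xh > 0)
      \<and> exp_dist p Q d \<le> D \<and> f_div f p (out_marg p Q) \<le> P}"

text \<open>g(p,r,xh) = f(p(xh)/r(xh)) - p(xh)/r(xh) * \<partial>f(p(xh)/r(xh)), with df a subgradient selection.\<close>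
definition gfun :: "(real \<Rightarrow> real) \<Rightarrow> (real \<Rightarrow> real) \<Rightarrow> ('a \<Rightarrow> real) \<Rightarrow> ('a \<Rightarrow> real) \<Rightarrow> 'a \<Rightarrow> real" where
  "gfun f df p r xh = f (p xh / r xh) - p xh / r xh * df (p xh / r xh)"

definition Afun :: "(real \<Rightarrow> real) \<Rightarrow> (real \<Rightarrow> real) \<Rightarrow> ('a \<Rightarrow> 'a \<Rightarrow> real) \<Rightarrow> ('a \<Rightarrow> real)
    \<Rightarrow> real \<Rightarrow> real \<Rightarrow> ('a \<Rightarrow> real) \<Rightarrow> 'a \<Rightarrow> 'a \<Rightarrow> real" where
  "Afun f df d p s1 s2 r x xh = exp (- s1 * d x xh - s2 * gfun f df p r xh)"

definition is_Qq :: "(real \<Rightarrow> real) \<Rightarrow> (real \<Rightarrow> real) \<Rightarrow> ('a::finite \<Rightarrow> 'a \<Rightarrow> real) \<Rightarrow> ('a \<Rightarrow> real)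
    \<Rightarrow> real \<Rightarrow> real \<Rightarrow> ('a \<Rightarrow> real) \<Rightarrow> ('a \<Rightarrow> 'a \<Rightarrow> real) \<Rightarrow> bool" where
  "is_Qq f df d p s1 s2 q Q \<longleftrightarrow> (\<forall>x xh. Q x xh =
      q xh * Afun f df d p s1 s2 (out_marg p Q) x xh
      / (\<Sum>i\<in>UNIV. q i * Afun f df d p s1 s2 (out_marg p Q) x i))"

text \<open>The objective minimised over q (given a selection Qm of Q[q]).\<close>
definition objective :: "(real \<Rightarrow> real) \<Rightarrow> (real \<Rightarrow> real) \<Rightarrow> ('a::finite \<Rightarrow> 'a \<Rightarrow> real) \<Rightarrow> ('a \<Rightarrow> real)
    \<Rightarrow> real \<Rightarrow> real \<Rightarrow> (('a \<Rightarrow> real) \<Rightarrow> ('a \<Rightarrow> 'a \<Rightarrow> real)) \<Rightarrow> ('a \<Rightarrow> real) \<Rightarrow> real" where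
  "objective f df d p s1 s2 Qm q =
     s2 * (\<Sum>xh\<in>UNIV. p xh * df (p xh / out_marg p (Qm q) xh))
     - (\<Sum>x\<in>UNIV. p x * ln (\<Sum>xh\<in>UNIV. q xh * Afun f df d p s1 s2 (out_marg p (Qm q)) x xh))"

end

theory Submission
  imports Defs
begin

lemma gibbs_pt:
  fixes a b S :: real
  assumes "a \<ge> 0" "b > 0" "S > 0"
  shows "a * ln (a / b) \<ge> a - b / S - a * ln S"
proof (cases "a = 0")
  case True then show ?thesis using assms by simp
next
  case False
  then have a: "a > 0" using assms by simp
  have "ln (b / (a * S)) \<le> b / (a * S) - 1"
    by (rule ln_le_minus_one) (use a assms in simp)
  moreover have "ln (b / (a * S)) = ln b - ln a - ln S"
    using a assms by (simp add: ln_div ln_mult)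
  moreover have "ln (a / b) = ln a - ln b" using a assms by (simp add: ln_div)
  ultimately have "ln (a / b) \<ge> 1 - b / (a * S) - ln S" by linarith
  then have "a * ln (a / b) \<ge> a * (1 - b / (a * S) - ln S)"
    using a by (simp add: mult_left_mono)
  also have "a * (1 - b / (a * S) - ln S) = a - b / S - a * ln S"
    using a assms by (simp add: field_simps)
  finally show ?thesis .
qed

lemma gibbs:
  fixes a b :: "'a::finite \<Rightarrow> real"
  assumes "\<forall>x. a x \<ge> 0" "(\<Sum>x\<in>UNIV. a x) = 1" "\<forall>x. b x > 0"
  shows "(\<Sum>x\<in>UNIV. a x * ln (a x / b x)) \<ge> - ln (\<Sum>x\<in>UNIV. b x)"
proof -
  define S where "S = (\<Sum>x\<in>UNIV. b x)"
  have S: "S > 0" unfolding S_def using assms(3) by (simp add: sum_pos)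
  have "(\<Sum>x\<in>UNIV. a x * ln (a x / b x)) \<ge> (\<Sum>x\<in>UNIV. a x - b x / S - a x * ln S)"
    by (rule sum_mono) (use gibbs_pt assms S in auto)
  also have "(\<Sum>x\<in>UNIV. a x - b x / S - a x * ln S) = 1 - S / S - ln S"
    using assms(2) by (simp add: sum_subtractf sum_divide_distrib[symmetric] sum_distrib_right[symmetric] S_def)
  finally show ?thesis using S by (simp add: S_def)
qed


lemma persp:
  fixes f df :: "real \<Rightarrow> real"
  assumes df_subgrad: "\<forall>t>0. \<forall>u>0. f u \<ge> f t + df t * (u - t)"
    and "pp > 0" "r > 0" "w > 0"
  shows "w * f (pp / w) \<ge> w * (f (pp / r) - pp / r * df (pp / r)) + pp * df (pp / r)"
proof -
  have "f (pp / w) \<ge> f (pp / r) + df (pp / r) * (pp / w - pp / r)"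
    using df_subgrad assms by simp
  then have "w * f (pp / w) \<ge> w * (f (pp / r) + df (pp / r) * (pp / w - pp / r))"
    using assms by (simp add: mult_left_mono)
  also have "w * (f (pp / r) + df (pp / r) * (pp / w - pp / r))
      = w * (f (pp / r) - pp / r * df (pp / r)) + pp * df (pp / r)"
    using assms by (simp add: field_simps)
  finally show ?thesis .
qed

lemma is_Qq_props:
  fixes p :: "'a::finite \<Rightarrow> real"
  assumes p_pos: "\<forall>x. p x > 0" and q: "\<forall>xh. q xh > 0"
    and Q: "is_Qq f df d p s1 s2 q Q"
  shows "\<forall>x xh. Q x xh > 0" "\<forall>x. (\<Sum>xh\<in>UNIV. Q x xh) = 1"
    "\<forall>xh. out_marg p Q xh > 0"
    "\<forall>x. (\<Sum>i\<in>UNIV. q i * Afun f df d p s1 s2 (out_marg p Q) x i) > 0"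
proof -
  let ?A = "Afun f df d p s1 s2 (out_marg p Q)"
  have Apos: "\<And>x xh. ?A x xh > 0" by (simp add: Afun_def)
  show Z: "\<forall>x. (\<Sum>i\<in>UNIV. q i * ?A x i) > 0"
    using Apos q by (simp add: sum_pos)
  have eq: "\<And>x xh. Q x xh = q xh * ?A x xh / (\<Sum>i\<in>UNIV. q i * ?A x i)"
    using Q unfolding is_Qq_def by blast
  show pos: "\<forall>x xh. Q x xh > 0"
    using Z Apos q eq by simp
  show "\<forall>x. (\<Sum>xh\<in>UNIV. Q x xh) = 1"
  proof
    fix x
    have "(\<Sum>xh\<in>UNIV. Q x xh) = (\<Sum>xh\<in>UNIV. q xh * ?A x xh) / (\<Sum>i\<in>UNIV. q i * ?A x i)"
      by (simp only: eq sum_divide_distrib)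
    then show "(\<Sum>xh\<in>UNIV. Q x xh) = 1" using Z by (metis less_irrefl divide_self)
  qed
  show "\<forall>xh. out_marg p Q xh > 0"
    using pos p_pos by (simp add: out_marg_def sum_pos)
qed


lemma obj_le_J:
  fixes p :: "'a::finite \<Rightarrow> real"
  assumes p_pos: "\<forall>x. p x > 0"
    and df_subgrad: "\<forall>t>0. \<forall>u>0. f u \<ge> f t + df t * (u - t)"
    and s2: "s2 \<ge> 0"
    and Qfix: "is_Qq f df d p s1 s2 q (Qm q)"
    and q: "\<forall>xh. q xh > 0"
    and W: "channel W" and rW: "\<forall>xh. out_marg p W xh > 0"
  shows "objective f df d p s1 s2 Qm q \<le>
     (\<Sum>x\<in>UNIV. \<Sum>xh\<in>UNIV. p x * W x xh * ln (W x xh / q xh))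
     + s1 * exp_dist p W d + s2 * f_div f p (out_marg p W)"
proof -
  define r where "r = out_marg p (Qm q)"
  define A where "A = Afun f df d p s1 s2 r"
  define Z where "Z x = (\<Sum>i\<in>UNIV. q i * A x i)" for x
  define g where "g = gfun f df p r"
  define rW where "rW = out_marg p W"
  note props = is_Qq_props[OF p_pos q Qfix]
  have rpos: "\<forall>xh. r xh > 0" using props(3) by (simp add: r_def)
  have Apos: "\<And>x xh. A x xh > 0" by (simp add: A_def Afun_def)
  have lnA: "\<And>x xh. ln (A x xh) = - s1 * d x xh - s2 * g xh"
    by (simp add: A_def Afun_def g_def)
  have Wnn: "\<And>x xh. W x xh \<ge> 0" and Wsum: "\<And>x. (\<Sum>xh\<in>UNIV. W x xh) = 1"
    using W by (auto simp: channel_def)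
  have step1: "- ln (Z x) \<le> (\<Sum>xh\<in>UNIV. W x xh * ln (W x xh / (q xh * A x xh)))" for x
    unfolding Z_def using gibbs[of "W x" "\<lambda>xh. q xh * A x xh"] Wnn Wsum q Apos by simp
  have step2: "W x xh * ln (W x xh / (q xh * A x xh)) =
      W x xh * ln (W x xh / q xh) + s1 * (W x xh * d x xh) + s2 * (W x xh * g xh)" for x xh
  proof (cases "W x xh = 0")
    case True then show ?thesis by simp
  next
    case False
    then have "W x xh > 0" using Wnn[of x xh] by simp
    then have "ln (W x xh / (q xh * A x xh)) = ln (W x xh / q xh) - ln (A x xh)"
      using q Apos[of x xh] \<open>W x xh > 0\<close>
      by (simp add: ln_div ln_mult less_imp_neq[symmetric])
    then show ?thesis by (simp add: lnA algebra_simps)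
  qed
  have step3: "(\<Sum>x\<in>UNIV. p x * (- ln (Z x))) \<le>
     (\<Sum>x\<in>UNIV. \<Sum>xh\<in>UNIV. p x * W x xh * ln (W x xh / q xh))
     + s1 * exp_dist p W d + s2 * (\<Sum>xh\<in>UNIV. rW xh * g xh)"
  proof -
    have "(\<Sum>x\<in>UNIV. p x * (- ln (Z x))) \<le>
        (\<Sum>x\<in>UNIV. p x * (\<Sum>xh\<in>UNIV. W x xh * ln (W x xh / (q xh * A x xh))))"
      by (rule sum_mono) (metis step1 p_pos mult_left_mono less_imp_le mult_minus_right)
    also have "\<dots> = (\<Sum>x\<in>UNIV. \<Sum>xh\<in>UNIV. p x * W x xh * ln (W x xh / q xh)
         + s1 * (p x * W x xh * d x xh) + s2 * (p x * W x xh * g xh))"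
      by (simp add: step2 sum_distrib_left algebra_simps)
    also have "\<dots> = (\<Sum>x\<in>UNIV. \<Sum>xh\<in>UNIV. p x * W x xh * ln (W x xh / q xh))
         + s1 * exp_dist p W d + s2 * (\<Sum>x\<in>UNIV. \<Sum>xh\<in>UNIV. p x * W x xh * g xh)"
      by (simp add: sum.distrib exp_dist_def sum_distrib_left)
    also have "(\<Sum>x\<in>UNIV. \<Sum>xh\<in>UNIV. p x * W x xh * g xh) = (\<Sum>xh\<in>UNIV. rW xh * g xh)"
      by (simp add: rW_def out_marg_def sum_distrib_right) (rule sum.swap)
    finally show ?thesis .
  qed
  have step4: "(\<Sum>xh\<in>UNIV. p xh * df (p xh / r xh)) + (\<Sum>xh\<in>UNIV. rW xh * g xh)
      \<le> f_div f p rW"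
  proof -
    have "(\<Sum>xh\<in>UNIV. p xh * df (p xh / r xh)) + (\<Sum>xh\<in>UNIV. rW xh * g xh)
       = (\<Sum>xh\<in>UNIV. rW xh * g xh + p xh * df (p xh / r xh))"
      by (simp add: sum.distrib)
    also have "\<dots> \<le> (\<Sum>xh\<in>UNIV. rW xh * f (p xh / rW xh))"
      by (rule sum_mono)
        (use persp[OF df_subgrad] p_pos rpos rW in \<open>simp add: g_def gfun_def rW_def\<close>)
    finally show ?thesis by (simp add: f_div_def)
  qed
  have "objective f df d p s1 s2 Qm q = s2 * (\<Sum>xh\<in>UNIV. p xh * df (p xh / r xh))
      + (\<Sum>x\<in>UNIV. p x * (- ln (Z x)))"
    by (simp add: objective_def r_def Z_def A_def sum_negf)
  also have "\<dots> \<le> s2 * (\<Sum>xh\<in>UNIV. p xh * df (p xh / r xh))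
     + ((\<Sum>x\<in>UNIV. \<Sum>xh\<in>UNIV. p x * W x xh * ln (W x xh / q xh))
     + s1 * exp_dist p W d + s2 * (\<Sum>xh\<in>UNIV. rW xh * g xh))"
    using step3 by simp
  also have "\<dots> = (\<Sum>x\<in>UNIV. \<Sum>xh\<in>UNIV. p x * W x xh * ln (W x xh / q xh))
     + s1 * exp_dist p W d + s2 * ((\<Sum>xh\<in>UNIV. p xh * df (p xh / r xh)) + (\<Sum>xh\<in>UNIV. rW xh * g xh))"
    by (simp add: algebra_simps)
  also have "\<dots> \<le> (\<Sum>x\<in>UNIV. \<Sum>xh\<in>UNIV. p x * W x xh * ln (W x xh / q xh))
     + s1 * exp_dist p W d + s2 * f_div f p rW"
    using step4 s2 by (simp add: mult_left_mono)
  finally show ?thesis by (simp add: rW_def)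
qed


lemma out_marg_sum:
  fixes p :: "'a::finite \<Rightarrow> real"
  assumes "prob_vec p" "channel Q"
  shows "(\<Sum>xh\<in>UNIV. out_marg p Q xh) = 1"
proof -
  have "(\<Sum>xh\<in>UNIV. out_marg p Q xh) = (\<Sum>x\<in>UNIV. p x * (\<Sum>xh\<in>UNIV. Q x xh))"
    unfolding out_marg_def by (simp add: sum_distrib_left) (rule sum.swap)
  also have "\<dots> = 1" using assms by (simp add: prob_vec_def channel_def)
  finally show ?thesis .
qed

theorem corollary1:
  fixes p :: "'a::finite \<Rightarrow> real"
    and d :: "'a \<Rightarrow> 'a \<Rightarrow> real"
    and f df :: "real \<Rightarrow> real"
    and s1 s2 :: real
    and Qm :: "('a \<Rightarrow> real) \<Rightarrow> ('a \<Rightarrow> 'a \<Rightarrow> real)"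
    and qs :: "'a \<Rightarrow> real"
  assumes p_prob: "prob_vec p" and p_pos: "\<forall>x. p x > 0"
    and d_nonneg: "\<forall>x xh. d x xh \<ge> 0"
    and f_convex: "convex_on {0<..} f" and f_one: "f 1 = 0"
    and df_subgrad: "\<forall>t>0. \<forall>u>0. f u \<ge> f t + df t * (u - t)"
    and s1: "s1 \<ge> 0" and s2: "s2 \<ge> 0"
    and Qm_fix: "\<forall>q. prob_vec q \<and> (\<forall>xh. q xh > 0) \<longrightarrow> is_Qq f df d p s1 s2 q (Qm q)"
    and qs_dom: "prob_vec qs" "\<forall>xh. qs xh > 0"
    and qs_min: "\<forall>q. prob_vec q \<and> (\<forall>xh. q xh > 0) \<longrightarrow>
                   objective f df d p s1 s2 Qm qs \<le> objective f df d p s1 s2 Qm q"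
  shows "let r = out_marg p (Qm qs);
             Ds = (\<Sum>x\<in>UNIV. \<Sum>xh\<in>UNIV. p x *
                     (qs xh * Afun f df d p s1 s2 r x xh
                       / (\<Sum>i\<in>UNIV. qs i * Afun f df d p s1 s2 r x i)) * d x xh);
             Ps = f_div f p r
         in rdp f p d Ds Ps = - s1 * Ds - s2 * Ps + objective f df d p s1 s2 Qm qs"
proof -
  define Q where "Q = Qm qs"
  define r where "r = out_marg p Q"
  define A where "A = Afun f df d p s1 s2 r"
  define Z where "Z x = (\<Sum>i\<in>UNIV. qs i * A x i)" for x
  define g where "g = gfun f df p r"
  define Ds where "Ds = (\<Sum>x\<in>UNIV. \<Sum>xh\<in>UNIV. p x *
                     (qs xh * A x xh / (\<Sum>i\<in>UNIV. qs i * A x i)) * d x xh)"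
  define Ps where "Ps = f_div f p r"
  have QQ: "is_Qq f df d p s1 s2 qs Q" using Qm_fix qs_dom by (simp add: Q_def)
  note props = is_Qq_props[OF p_pos qs_dom(2) QQ]
  have Qpos: "\<And>x xh. Q x xh > 0" using props(1) by simp
  have Qch: "channel Q" using props(1,2) by (simp add: channel_def less_imp_le)
  have rpos: "\<And>xh. r xh > 0" using props(3) by (simp add: r_def)
  have Zpos: "\<And>x. Z x > 0" using props(4) by (simp add: Z_def A_def r_def)
  have Qeq: "\<And>x xh. Q x xh = qs xh * A x xh / Z x"
    using QQ unfolding is_Qq_def Z_def A_def r_def by blast
  have Ds_eq: "Ds = exp_dist p Q d"
    by (simp add: Ds_def exp_dist_def Qeq Z_def)
  have rnz: "\<And>xh. r xh \<noteq> 0" using rpos by (metis less_irrefl)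
  have rsum: "(\<Sum>xh\<in>UNIV. r xh) = 1" using out_marg_sum[OF p_prob Qch] by (simp add: r_def)
  have Qsum: "\<And>x. (\<Sum>xh\<in>UNIV. Q x xh) = 1" using props(2) by simp
  have psum: "(\<Sum>x\<in>UNIV. p x) = 1" using p_prob by (simp add: prob_vec_def)
  define L where "L = - s1 * Ds - s2 * Ps + objective f df d p s1 s2 Qm qs"
  have lnQ: "ln (Q x xh / qs xh) = - s1 * d x xh - s2 * g xh - ln (Z x)" for x xh
  proof -
    have "Q x xh / qs xh = A x xh / Z x" using Qeq[of x xh] qs_dom(2) less_imp_neq[OF qs_dom(2)[rule_format, of xh]]
      by (simp add: field_simps)
    then have "ln (Q x xh / qs xh) = ln (A x xh) - ln (Z x)"
      using Zpos[of x] by (simp add: ln_div A_def Afun_def)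
    then show ?thesis by (simp add: A_def Afun_def g_def)
  qed
  have rg: "(\<Sum>xh\<in>UNIV. r xh * g xh) = Ps - (\<Sum>xh\<in>UNIV. p xh * df (p xh / r xh))"
  proof -
    have "\<And>xh. r xh * g xh = r xh * f (p xh / r xh) - p xh * df (p xh / r xh)"
      using rnz by (simp add: g_def gfun_def field_simps)
    then show ?thesis by (simp add: sum_subtractf Ps_def f_div_def)
  qed
  have ident: "(\<Sum>x\<in>UNIV. \<Sum>xh\<in>UNIV. p x * Q x xh * ln (Q x xh / qs xh)) = L"
  proof -
    have "(\<Sum>x\<in>UNIV. \<Sum>xh\<in>UNIV. p x * Q x xh * ln (Q x xh / qs xh))
      = (\<Sum>x\<in>UNIV. \<Sum>xh\<in>UNIV. - s1 * (p x * Q x xh * d x xh) - s2 * (p x * Q x xh * g xh)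
           - p x * ln (Z x) * Q x xh)"
      by (simp add: lnQ algebra_simps)
    also have "\<dots> = - s1 * exp_dist p Q d - s2 * (\<Sum>x\<in>UNIV. \<Sum>xh\<in>UNIV. p x * Q x xh * g xh)
        - (\<Sum>x\<in>UNIV. p x * ln (Z x) * (\<Sum>xh\<in>UNIV. Q x xh))"
      by (simp add: sum_subtractf sum_distrib_left exp_dist_def)
    also have "(\<Sum>x\<in>UNIV. \<Sum>xh\<in>UNIV. p x * Q x xh * g xh) = (\<Sum>xh\<in>UNIV. r xh * g xh)"
      by (simp add: r_def out_marg_def sum_distrib_right) (rule sum.swap)
    also have "(\<Sum>x\<in>UNIV. p x * ln (Z x) * (\<Sum>xh\<in>UNIV. Q x xh)) = (\<Sum>x\<in>UNIV. p x * ln (Z x))"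
      by (simp add: Qsum)
    finally have X: "(\<Sum>x\<in>UNIV. \<Sum>xh\<in>UNIV. p x * Q x xh * ln (Q x xh / qs xh))
        = - s1 * exp_dist p Q d - s2 * (\<Sum>xh\<in>UNIV. r xh * g xh) - (\<Sum>x\<in>UNIV. p x * ln (Z x))" .
    have obj: "objective f df d p s1 s2 Qm qs = s2 * (\<Sum>xh\<in>UNIV. p xh * df (p xh / r xh))
        - (\<Sum>x\<in>UNIV. p x * ln (Z x))"
      by (simp add: objective_def Q_def[symmetric] r_def[symmetric] A_def[symmetric] Z_def[symmetric])
    show ?thesis unfolding X L_def obj rg Ds_eq by (simp add: algebra_simps)
  qed
  have MI_le: "mutual_info p Q \<le> L"
  proof -
    have lnsplit: "\<And>x xh. ln (Q x xh / r xh) = ln (Q x xh / qs xh) - ln (r xh / qs xh)"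
    proof -
      fix x xh
      have "Q x xh > 0" "r xh > 0" "qs xh > 0" using Qpos rpos qs_dom(2) by auto
      then show "ln (Q x xh / r xh) = ln (Q x xh / qs xh) - ln (r xh / qs xh)"
        by (simp add: ln_div)
    qed
    have "mutual_info p Q = (\<Sum>x\<in>UNIV. \<Sum>xh\<in>UNIV. p x * Q x xh * ln (Q x xh / qs xh))
        - (\<Sum>x\<in>UNIV. \<Sum>xh\<in>UNIV. p x * Q x xh * ln (r xh / qs xh))"
      unfolding mutual_info_def r_def[symmetric] lnsplit
      by (simp add: right_diff_distrib sum_subtractf)
    also have "(\<Sum>x\<in>UNIV. \<Sum>xh\<in>UNIV. p x * Q x xh * ln (r xh / qs xh))
        = (\<Sum>xh\<in>UNIV. r xh * ln (r xh / qs xh))"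
      by (simp add: r_def out_marg_def sum_distrib_right) (rule sum.swap)
    finally have E: "mutual_info p Q = (\<Sum>x\<in>UNIV. \<Sum>xh\<in>UNIV. p x * Q x xh * ln (Q x xh / qs xh))
        - (\<Sum>xh\<in>UNIV. r xh * ln (r xh / qs xh))" .
    have "(\<Sum>xh\<in>UNIV. r xh * ln (r xh / qs xh)) \<ge> 0"
      using gibbs[of r qs] rpos rsum qs_dom by (simp add: prob_vec_def less_imp_le)
    then show ?thesis using ident E by simp
  qed
  define S where "S = {mutual_info p Q' | Q'. channel Q' \<and> (\<forall>xh. out_marg p Q' xh > 0)
      \<and> exp_dist p Q' d \<le> Ds \<and> f_div f p (out_marg p Q') \<le> Ps}"
  have inS: "mutual_info p Q \<in> S"
    unfolding S_def using Qch props(3) Ds_eq by (auto simp: Ps_def r_def)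
  have lower: "L \<le> v" if "v \<in> S" for v
  proof -
    obtain W where v: "v = mutual_info p W" and W: "channel W" "\<forall>xh. out_marg p W xh > 0"
      "exp_dist p W d \<le> Ds" "f_div f p (out_marg p W) \<le> Ps"
      using \<open>v \<in> S\<close> unfolding S_def by blast
    have rWp: "prob_vec (out_marg p W)"
      using W(2) out_marg_sum[OF p_prob W(1)] by (simp add: prob_vec_def less_imp_le)
    have "objective f df d p s1 s2 Qm qs \<le> objective f df d p s1 s2 Qm (out_marg p W)"
      using qs_min rWp W(2) by blast
    also have "\<dots> \<le> mutual_info p W + s1 * exp_dist p W d + s2 * f_div f p (out_marg p W)"
      using obj_le_J[OF p_pos df_subgrad s2 _ W(2) W(1) W(2)] Qm_fix rWp W(2)
      by (simp add: mutual_info_def)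
    also have "\<dots> \<le> mutual_info p W + s1 * Ds + s2 * Ps"
      using W(3,4) s1 s2 by (simp add: add_mono mult_left_mono)
    finally show ?thesis by (simp add: L_def v)
  qed
  have "Inf S = L"
  proof (rule antisym)
    have "bdd_below S" using lower by (rule bdd_belowI)
    then have "Inf S \<le> mutual_info p Q" by (rule cInf_lower[OF inS])
    then show "Inf S \<le> L" using MI_le by simp
    show "L \<le> Inf S" using inS lower by (intro cInf_greatest) auto
  qed
  then show ?thesis
    by (simp add: Let_def rdp_def S_def L_def Ds_def Ps_def A_def r_def Q_def)
qed

end
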